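(* If $G$ is a finite connected interval graph, then the subgraph of $G$ induced by the vertices of positive weight is a disjoint union of paths.
   Context: A finite simple graph is an interval graph iff its vertices can be assigned (closed, bounded) real intervals so that two vertices are adjacent iff their intervals intersect. A local component at a vertex $z$ is a connected component of $G\setminus\{z\}$; it is exterior iff it contains a vertex not adjacent to $z$. If $z$ has $n$ local components, the weight $\mathrm{wt}(z)$ is the sum of the $n-2$ smallest orders among the non-exterior local components at $z$ ($0$ if $n\le 2$). *)

theory Defs
  imports Complex_Main "HOL-Library.Multiset"
begin

definition simple_graph :: "'a set \<Rightarrow> ('a \<Rightarrow> 'a \<Rightarrow> bool) \<Rightarrow> bool" where
  "simple_graph V E \<longleftrightarrow> finite V \<and> (\<forall>u v. E u v \<longrightarrow> u \<in> V \<and> v \<in> V)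
     \<and> (\<forall>u v. E u v \<longrightarrow> E v u) \<and> (\<forall>v. \<not> E v v)"

definition reach_in :: "('a \<Rightarrow> 'a \<Rightarrow> bool) \<Rightarrow> 'a set \<Rightarrow> 'a \<Rightarrow> 'a \<Rightarrow> bool" where
  "reach_in E W = (\<lambda>u v. u \<in> W \<and> v \<in> W \<and> E u v)\<^sup>*\<^sup>*"

definition connected_graph :: "'a set \<Rightarrow> ('a \<Rightarrow> 'a \<Rightarrow> bool) \<Rightarrow> bool" where
  "connected_graph V E \<longleftrightarrow> V \<noteq> {} \<and> (\<forall>u\<in>V. \<forall>v\<in>V. reach_in E V u v)"

definition components_in :: "('a \<Rightarrow> 'a \<Rightarrow> bool) \<Rightarrow> 'a set \<Rightarrow> 'a set set" where
  "components_in E W = {{y. reach_in E W x y} | x. x \<in> W}"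

definition interval_graph :: "'a set \<Rightarrow> ('a \<Rightarrow> 'a \<Rightarrow> bool) \<Rightarrow> bool" where
  "interval_graph V E \<longleftrightarrow> (\<exists>l r :: 'a \<Rightarrow> real. (\<forall>v\<in>V. l v \<le> r v) \<and>
     (\<forall>u\<in>V. \<forall>v\<in>V. u \<noteq> v \<longrightarrow> (E u v \<longleftrightarrow> {l u..r u} \<inter> {l v..r v} \<noteq> {})))"

definition local_components :: "'a set \<Rightarrow> ('a \<Rightarrow> 'a \<Rightarrow> bool) \<Rightarrow> 'a \<Rightarrow> 'a set set" where
  "local_components V E z = components_in E (V - {z})"

definition exterior :: "('a \<Rightarrow> 'a \<Rightarrow> bool) \<Rightarrow> 'a \<Rightarrow> 'a set \<Rightarrow> bool" where
  "exterior E z C \<longleftrightarrow> (\<exists>v\<in>C. \<not> E z v)"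

text \<open>Weight: sum of the (n-2) smallest orders of the non-exterior local components,
  n = number of local components (0 if n \<le> 2).\<close>
definition wt :: "'a set \<Rightarrow> ('a \<Rightarrow> 'a \<Rightarrow> bool) \<Rightarrow> 'a \<Rightarrow> nat" where
  "wt V E z = (let LC = local_components V E z;
                   n = card LC;
                   orders = sorted_list_of_multiset
                              (image_mset card (mset_set {C \<in> LC. \<not> exterior E z C}))
               in sum_list (take (n - 2) orders))"

definition is_path_graph :: "'a set \<Rightarrow> ('a \<Rightarrow> 'a \<Rightarrow> bool) \<Rightarrow> bool" where
  "is_path_graph S E \<longleftrightarrow> (\<exists>xs. xs \<noteq> [] \<and> distinct xs \<and> set xs = S \<and>
     (\<forall>u\<in>S. \<forall>v\<in>S. E u v \<longleftrightarrow>
        (\<exists>i. Suc i < length xs \<and> ({u, v} = {xs ! i, xs ! Suc i}))))"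

definition disjoint_union_of_paths :: "'a set \<Rightarrow> ('a \<Rightarrow> 'a \<Rightarrow> bool) \<Rightarrow> bool" where
  "disjoint_union_of_paths W E \<longleftrightarrow> (\<forall>C \<in> components_in E W. is_path_graph C E)"

end

theory Submission
  imports Defs
begin

lemma reach_sym:
  assumes "symp E" "reach_in E W u v"
  shows "reach_in E W v u"
  using assms(2) unfolding reach_in_def
  by (induction rule: rtranclp_induct)
     (auto intro: converse_rtranclp_into_rtranclp sympD[OF assms(1)])

lemma reach_trans:
  "reach_in E W u v \<Longrightarrow> reach_in E W v w \<Longrightarrow> reach_in E W u w"
  unfolding reach_in_def by auto

lemma reach_step:
  "u \<in> W \<Longrightarrow> v \<in> W \<Longrightarrow> E u v \<Longrightarrow> reach_in E W u v"
  unfolding reach_in_def by auto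

lemma reach_refl: "reach_in E W u u"
  unfolding reach_in_def by auto

lemma reach_mem:
  assumes "reach_in E W u v" "u \<in> W" shows "v \<in> W"
  using assms unfolding reach_in_def
  by (induction rule: rtranclp_induct) auto

lemma wt_pos: "0 < wt V E z \<Longrightarrow> 3 \<le> card (local_components V E z)"
  unfolding wt_def Let_def
  by (cases "card (local_components V E z) \<le> 2") auto

lemma K:
  assumes sg: "simple_graph V E" and conn: "connected_graph V E"
    and w: "w \<in> V" and a: "a \<in> V" and c: "c \<in> V" and aw: "a \<noteq> w" and cw: "c \<noteq> w"
    and ac: "a = c \<or> E a c"
    and nb: "\<forall>x\<in>V. x \<noteq> w \<longrightarrow> x \<noteq> a \<longrightarrow> x \<noteq> c \<longrightarrow> E w x \<longrightarrow> E x a \<or> E x c"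
  shows "card (local_components V E w) \<le> 1"
proof -
  have sym: "\<And>u v. E u v \<Longrightarrow> E v u" using sg unfolding simple_graph_def by blast
  have ca: "reach_in E (V - {w}) c a"
    using ac a c aw cw sym by (auto intro: reach_step reach_refl)
  have R: "reach_in E (V - {w}) x a" if x: "x \<in> V" "x \<noteq> w" for x
  proof -
    have "reach_in E V x a" using conn x a unfolding connected_graph_def by blast
    then have "x = w \<or> reach_in E (V - {w}) x a"
      unfolding reach_in_def
    proof (induction rule: converse_rtranclp_induct)
      case base
      then show ?case by simp
    next
      case (step x y)
      show ?case
      proof (cases "x = w")
        case True then show ?thesis by simp
      next
        case xw: False
        show ?thesis
        proof (cases "y = w")
          case True
          then have Ewx: "E w x" using step sym by blast
          have "reach_in E (V - {w}) x a"
          proof (cases "x = a \<or> x = c")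
            case True then show ?thesis using ca reach_refl[of E "V-{w}" a] by auto
          next
            case False
            then have "E x a \<or> E x c" using nb step xw Ewx by blast
            moreover have xV: "x \<in> V - {w}" using step xw by simp
            moreover have "a \<in> V - {w}" "c \<in> V - {w}" using a c aw cw by auto
            ultimately show ?thesis
              using ca reach_step[of x "V - {w}" a E] reach_step[of x "V - {w}" c E] reach_trans[of E "V - {w}" x c a]
              by argo
          qed
          then show ?thesis unfolding reach_in_def by simp
        next
          case False
          then have "reach_in E (V - {w}) y a" using step unfolding reach_in_def by simp
          moreover have "reach_in E (V - {w}) x y" using step xw False by (auto intro: reach_step)
          ultimately have "reach_in E (V - {w}) x a" using reach_trans by metis
          then show ?thesis unfolding reach_in_def by simp
        qed
      qed
    qed
    then show ?thesis using x by simp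
  qed
  have "local_components V E w \<subseteq> {{y. reach_in E (V - {w}) a y}}"
  proof
    fix C assume "C \<in> local_components V E w"
    then obtain x where x: "x \<in> V - {w}" "C = {y. reach_in E (V - {w}) x y}"
      unfolding local_components_def components_in_def by blast
    have xa: "reach_in E (V - {w}) x a" using R x by blast
    have ax: "reach_in E (V - {w}) a x" using reach_sym[OF _ xa] sym by (simp add: symp_def)
    have "C = {y. reach_in E (V - {w}) a y}"
      using x(2) reach_trans[OF xa] reach_trans[OF ax] by blast
    then show "C \<in> {{y. reach_in E (V - {w}) a y}}" by simp
  qed
  from card_mono[OF _ this] show ?thesis by simp
qed

lemma L:
  assumes fin: "finite P" and inj: "inj_on l P"
    and symE: "\<And>u v. E u v \<Longrightarrow> E v u" and irr: "\<And>v. \<not> E v v"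
    and H: "\<And>a b c. a \<in> P \<Longrightarrow> b \<in> P \<Longrightarrow> c \<in> P \<Longrightarrow> (l a :: real) < l b \<Longrightarrow> l b < l c \<Longrightarrow> \<not> E a c"
  shows "disjoint_union_of_paths P E"
  unfolding disjoint_union_of_paths_def
proof
  fix C assume "C \<in> components_in E P"
  then obtain x0 where x0: "x0 \<in> P" "C = {y. reach_in E P x0 y}"
    unfolding components_in_def by blast
  have CP: "C \<subseteq> P" using x0 reach_mem[of E P x0] by blast
  have x0C: "x0 \<in> C" using x0 reach_refl[of E P x0] by simp
  have finC: "finite C" using CP fin finite_subset by blast
  have injC: "inj_on l C" using inj CP inj_on_subset by blast
  have reachC: "reach_in E P u v" if "u \<in> C" "v \<in> C" for u v
  proof -
    have "reach_in E P x0 u" using that x0 by blast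
    then have "reach_in E P u x0" using reach_sym[of E P x0 u] symE by (simp add: symp_def)
    moreover have "reach_in E P x0 v" using that x0 by blast
    ultimately show ?thesis by (rule reach_trans)
  qed
  define ys where "ys = sorted_list_of_set (l ` C)"
  define xs where "xs = map (inv_into C l) ys"
  have setys: "set ys = l ` C" using finC ys_def by simp
  have ss: "sorted_wrt (<) ys" unfolding ys_def by simp
  have len: "length xs = length ys" unfolding xs_def by simp
  have lxs: "l (xs ! i) = ys ! i" if "i < length ys" for i
    using that setys unfolding xs_def by (metis f_inv_into_f nth_map nth_mem)
  have xsC: "xs ! i \<in> C" if "i < length ys" for i
    using that setys unfolding xs_def by (metis inv_into_into nth_map nth_mem)
  have setxs: "set xs = C" unfolding xs_def using setys injC by simp
  have dxs: "distinct xs" unfolding xs_def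
    using setys ss strict_sorted_iff by (auto simp: distinct_map intro!: inj_on_inv_into)
  have idx_lt: "i < j" if "i < length ys" "j < length ys" "ys ! i < ys ! j" for i j
  proof (rule ccontr)
    assume "\<not> i < j"
    then have "j = i \<or> j < i" by auto
    then show False using that sorted_wrt_nth_less[OF ss, of j i] by auto
  qed
  have idx_le: "i \<le> j" if "i < length ys" "j < length ys" "ys ! i \<le> ys ! j" for i j
  proof (rule ccontr)
    assume "\<not> i \<le> j"
    then show False using that sorted_wrt_nth_less[OF ss, of j i] by auto
  qed
  have cons: "j = Suc i" if "i < length ys" "j < length ys" "ys ! i < ys ! j" "E (xs ! i) (xs ! j)" for i j
  proof (rule ccontr)
    assume ne: "j \<noteq> Suc i"
    have "i < j" using idx_lt that by blast
    with ne have sj: "Suc i < j" by auto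
    then have si: "Suc i < length ys" using that by auto
    have "ys ! i < ys ! Suc i" using sorted_wrt_nth_less[OF ss, of i "Suc i"] si by auto
    moreover have "ys ! Suc i < ys ! j" using sorted_wrt_nth_less[OF ss, of "Suc i" j] sj that by auto
    moreover have "xs ! i \<in> P" "xs ! Suc i \<in> P" "xs ! j \<in> P" using that si xsC CP by auto
    ultimately show False using H[of "xs ! i" "xs ! Suc i" "xs ! j"] that si lxs by auto
  qed
  show "is_path_graph C E"
    unfolding is_path_graph_def
  proof (intro exI conjI ballI)
    show "xs \<noteq> []" using setxs x0C by auto
    show "distinct xs" by (rule dxs)
    show "set xs = C" by (rule setxs)
    fix u v assume u: "u \<in> C" and v: "v \<in> C"
    show "E u v \<longleftrightarrow> (\<exists>i. Suc i < length xs \<and> {u, v} = {xs ! i, xs ! Suc i})"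
    proof
      assume Euv: "E u v"
      obtain i where i: "i < length ys" "xs ! i = u" using u setxs len by (metis in_set_conv_nth)
      obtain j where j: "j < length ys" "xs ! j = v" using v setxs len by (metis in_set_conv_nth)
      have "u \<noteq> v" using Euv irr by blast
      then have "l u \<noteq> l v" using injC u v inj_on_eq_iff by metis
      then have "ys ! i < ys ! j \<or> ys ! j < ys ! i" using lxs i j by auto
      then show "\<exists>i. Suc i < length xs \<and> {u, v} = {xs ! i, xs ! Suc i}"
      proof
        assume "ys ! i < ys ! j"
        then have "j = Suc i" using cons i j Euv by blast
        then show ?thesis using i j len by auto
      next
        assume "ys ! j < ys ! i"
        then have "i = Suc j" using cons i j Euv symE by blast
        then show ?thesis using i j len by auto
      qed
    next
      assume "\<exists>i. Suc i < length xs \<and> {u, v} = {xs ! i, xs ! Suc i}"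
      then obtain i where i: "Suc i < length ys" "{u, v} = {xs ! i, xs ! Suc i}" using len by auto
      have "E (xs ! i) (xs ! Suc i)"
      proof (rule ccontr)
        assume nE: "\<not> E (xs ! i) (xs ! Suc i)"
        define t where "t = ys ! i"
        have "\<forall>y. reach_in E P (xs ! i) y \<longrightarrow> y \<in> C \<and> l y \<le> t"
        proof (intro allI impI)
          fix y assume "reach_in E P (xs ! i) y"
          then show "y \<in> C \<and> l y \<le> t" unfolding reach_in_def
          proof (induction rule: rtranclp_induct)
            case base then show ?case using i xsC lxs t_def by auto
          next
            case (step y z)
            have zC: "z \<in> C"
            proof -
              have "reach_in E P x0 y" using step x0 by simp
              moreover have "reach_in E P y z" using step by (auto intro: reach_step)
              ultimately have "reach_in E P x0 z" by (rule reach_trans)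
              then show ?thesis using x0 by blast
            qed
            show ?case
            proof (rule ccontr)
              assume "\<not> (z \<in> C \<and> l z \<le> t)"
              then have lz: "t < l z" using zC by auto
              obtain p where p: "p < length ys" "xs ! p = y" using step setxs len by (metis in_set_conv_nth)
              obtain q where q: "q < length ys" "xs ! q = z" using zC setxs len by (metis in_set_conv_nth)
              have "ys ! p < ys ! q" using p q lxs lz step by fastforce
              then have qp: "q = Suc p" using cons p q step by blast
              have "p \<le> i" using idx_le[of p i] p i lxs step t_def by fastforce
              moreover have "i < q" using idx_lt[of i q] q i lxs lz t_def by fastforce
              ultimately have "p = i" using qp by auto
              then show False using nE step p q qp by auto
            qed
          qed
        qed
        moreover have "reach_in E P (xs ! i) (xs ! Suc i)" using reachC xsC i by auto
        ultimately have "l (xs ! Suc i) \<le> t" by blast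
        moreover have "ys ! i < ys ! Suc i" using sorted_wrt_nth_less[OF ss, of i "Suc i"] i by auto
        ultimately show False using lxs i t_def by auto
      qed
      then show "E u v" using i(2) symE by (auto simp: doubleton_eq_iff)
    qed
  qed
qed


theorem theorem2p4:
  fixes V :: "'a set" and E :: "'a \<Rightarrow> 'a \<Rightarrow> bool"
  assumes "simple_graph V E" and "connected_graph V E" and "interval_graph V E"
  shows "disjoint_union_of_paths {v \<in> V. wt V E v > 0} E"
proof -
  note sg = assms(1) and conn = assms(2)
  have symE: "\<And>u v. E u v \<Longrightarrow> E v u" and irr: "\<And>v. \<not> E v v" and finV: "finite V"
    using sg unfolding simple_graph_def by blast+
  obtain l r :: "'a \<Rightarrow> real" where lr: "\<forall>v\<in>V. l v \<le> r v"
    and iv: "\<forall>u\<in>V. \<forall>v\<in>V. u \<noteq> v \<longrightarrow> (E u v \<longleftrightarrow> {l u..r u} \<inter> {l v..r v} \<noteq> {})"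
    using assms(3) unfolding interval_graph_def by blast
  have adj: "E u v \<longleftrightarrow> l u \<le> r v \<and> l v \<le> r u" if "u \<in> V" "v \<in> V" "u \<noteq> v" for u v
  proof -
    have "{l u..r u} \<inter> {l v..r v} \<noteq> {} \<longleftrightarrow> l u \<le> r v \<and> l v \<le> r u"
    proof
      assume "{l u..r u} \<inter> {l v..r v} \<noteq> {}"
      then obtain x where "x \<in> {l u..r u}" "x \<in> {l v..r v}" by blast
      then show "l u \<le> r v \<and> l v \<le> r u" by auto
    next
      assume h: "l u \<le> r v \<and> l v \<le> r u"
      have "max (l u) (l v) \<in> {l u..r u} \<inter> {l v..r v}" using h lr that by auto
      then show "{l u..r u} \<inter> {l v..r v} \<noteq> {}" by blast
    qed
    then show ?thesis using iv that by blast
  qed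
  define P where "P = {v \<in> V. wt V E v > 0}"
  have PV: "P \<subseteq> V" unfolding P_def by blast
  have P3: "3 \<le> card (local_components V E z)" if "z \<in> P" for z
    using that wt_pos[of V E z] unfolding P_def by simp
  have A: False if ab: "a \<in> P" "b \<in> P" "a \<noteq> b" "E a b" "l a \<le> l b" "r b \<le> r a" for a b
  proof -
    have "card (local_components V E b) \<le> 1"
    proof (rule K[OF sg conn, of b a a])
      show "b \<in> V" "a \<in> V" using ab PV by auto
      show "a \<noteq> b" using ab by auto
      show "a \<in> V" using ab PV by auto
      show "a \<noteq> b" using ab by auto
      show "a = a \<or> E a a" by simp
      show "\<forall>x\<in>V. x \<noteq> b \<longrightarrow> x \<noteq> a \<longrightarrow> x \<noteq> a \<longrightarrow> E b x \<longrightarrow> E x a \<or> E x a"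
      proof (intro ballI impI)
        fix x assume x: "x \<in> V" "x \<noteq> b" "x \<noteq> a" "x \<noteq> a" "E b x"
        have "l b \<le> r x" "l x \<le> r b" using adj[of b x] x ab PV by auto
        then have "l x \<le> r a \<and> l a \<le> r x" using ab by auto
        then show "E x a \<or> E x a" using adj[of x a] x ab PV by auto
      qed
    qed
    then show False using P3[OF ab(2)] by simp
  qed
  have inj: "inj_on l P"
  proof (rule inj_onI)
    fix a b assume ab: "a \<in> P" "b \<in> P" "l a = l b"
    show "a = b"
    proof (rule ccontr)
      assume ne: "a \<noteq> b"
      have aV: "a \<in> V" and bV: "b \<in> V" using ab PV by auto
      have "l b \<le> r a" using lr aV ab(3) by auto
      moreover have "l a \<le> r b" using lr bV ab(3) by auto
      ultimately have Eab: "E a b" using adj[OF aV bV ne] by simp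
      show False
      proof (cases "r b \<le> r a")
        case True then show False using A[of a b] ab ne Eab by auto
      next
        case False then show False using A[of b a] ab ne Eab symE by auto
      qed
    qed
  qed
  have mono: "r a < r b" if ab: "a \<in> P" "b \<in> P" "l a < l b" for a b
  proof (rule ccontr)
    assume "\<not> r a < r b"
    then have rb: "r b \<le> r a" by simp
    have ne: "a \<noteq> b" using ab by auto
    have "E a b" using adj[of a b] ab ne PV lr rb by force
    then show False using A[of a b] ab ne rb by auto
  qed
  have H: "\<not> E a c" if abc: "a \<in> P" "b \<in> P" "c \<in> P" "l a < l b" "l b < l c" for a b c
  proof
    assume Eac: "E a c"
    have ne: "a \<noteq> b" "b \<noteq> c" "a \<noteq> c" using abc by auto
    have lcra: "l c \<le> r a" using adj[of a c] Eac abc ne PV by auto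
    have rbc: "r b < r c" using mono abc by blast
    have "card (local_components V E b) \<le> 1"
    proof (rule K[OF sg conn, of b a c])
      show "b \<in> V" "a \<in> V" "c \<in> V" using abc PV by auto
      show "a \<noteq> b" "c \<noteq> b" using ne by auto
      show "a = c \<or> E a c" using Eac by simp
      show "\<forall>x\<in>V. x \<noteq> b \<longrightarrow> x \<noteq> a \<longrightarrow> x \<noteq> c \<longrightarrow> E b x \<longrightarrow> E x a \<or> E x c"
      proof (intro ballI impI)
        fix x assume x: "x \<in> V" "x \<noteq> b" "x \<noteq> a" "x \<noteq> c" "E b x"
        have bx: "l b \<le> r x" "l x \<le> r b" using adj[of b x] x abc PV by auto
        show "E x a \<or> E x c"
        proof (cases "l x \<le> r a")
          case True
          then have "E x a" using adj[of x a] x abc PV bx by auto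
          then show ?thesis by simp
        next
          case False
          have "l x \<le> r c" using bx rbc by linarith
          moreover have "l c \<le> r x" using False lcra lr x by force
          ultimately have "E x c" using adj[of x c] x abc PV by auto
          then show ?thesis by simp
        qed
      qed
    qed
    then show False using P3[OF abc(2)] by simp
  qed
  have "disjoint_union_of_paths P E"
    by (rule L[of P l E]) (use finV PV finite_subset inj symE irr H in auto)
  then show ?thesis unfolding P_def .
qed

end
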